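(* Let $\tau\in(V_{j-1},V_j)$ for some $1\le j\le n$, and $\chi\in\mathbb R$. If $i\ne j$ is an index with $\beta_i\neq\pm1$, then there is no $z_0\in[e^{V_{i-1}},e^{V_i}]$ such that $\lim_{z\to z_0} zS'_{\tau,\chi}(z)=0$ (limit taken over $z\in\mathbb C\setminus\mathbb R$).
   Context: Let $V_0<V_1<\dots<V_n$, $\beta_1,\dots,\beta_n\in[-1,1]$, $\beta_0:=-1$, $\beta_{n+1}:=1$, with $\beta_i\ne\beta_{i+1}$ for all $0\le i\le n$. Let $V:[V_0,V_n]\to\mathbb R$ be continuous and linear with slope $\beta_i$ on $[V_{i-1},V_i]$. For $\tau\in[V_0,V_n]$, $\chi\in\mathbb R$ and $z\in\mathbb C\setminus\mathbb R$ define $$S_{\tau,\chi}(z)=\int_{V_0}^{\tau}\tfrac12(1+V'(M))\ln(1-e^{M}z^{-1})\,dM-\int_{\tau}^{V_n}\tfrac12(1-V'(M))\ln(1-e^{-M}z)\,dM-\big(\chi-\tfrac12V(\tau)\big)\ln z,$$ with $\ln$ the principal branch. *)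

theory Defs
  imports "HOL-Analysis.Analysis"
begin

definition beta_ext :: "(nat \<Rightarrow> real) \<Rightarrow> nat \<Rightarrow> nat \<Rightarrow> real" where
  "beta_ext \<beta> n k = (if k = 0 then -1 else if k = Suc n then 1 else \<beta> k)"

text \<open>The function S_{tau,chi}(z); Vf is the piecewise linear function V,
  Vpts k is the breakpoint V_k, and V' is the derivative of Vf (defined a.e.).\<close>
definition S_fun :: "(nat \<Rightarrow> real) \<Rightarrow> nat \<Rightarrow> (real \<Rightarrow> real) \<Rightarrow> real \<Rightarrow> real \<Rightarrow> complex \<Rightarrow> complex" where
  "S_fun Vpts n Vf \<tau> chi z =
     integral {Vpts 0..\<tau>}
       (\<lambda>M. complex_of_real ((1 + deriv Vf M) / 2) * Ln (1 - complex_of_real (exp M) / z))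
   - integral {\<tau>..Vpts n}
       (\<lambda>M. complex_of_real ((1 - deriv Vf M) / 2) * Ln (1 - complex_of_real (exp (- M)) * z))
   - complex_of_real (chi - Vf \<tau> / 2) * Ln z"

end

theory Submission imports Defs begin

definition good :: "complex set \<Rightarrow> (complex \<Rightarrow> real \<Rightarrow> complex) \<Rightarrow> (complex \<Rightarrow> real \<Rightarrow> complex)
   \<Rightarrow> (real \<Rightarrow> real) \<Rightarrow> real \<Rightarrow> real \<Rightarrow> bool" where
"good U F F' a p q \<longleftrightarrow> (\<forall>z\<in>U.
    (\<lambda>M. complex_of_real (a M) * F z M) integrable_on {p..q} \<and>
    (\<lambda>M. complex_of_real (a M) * F' z M) integrable_on {p..q} \<and>
    ((\<lambda>z. integral {p..q} (\<lambda>M. complex_of_real (a M) * F z M)) has_field_derivative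
       integral {p..q} (\<lambda>M. complex_of_real (a M) * F' z M)) (at z))"

lemma good_combine:
  assumes "p \<le> q" "q \<le> r" "open U" "good U F F' a p q" "good U F F' a q r"
  shows "good U F F' a p r"
  unfolding good_def
proof
  fix z assume z: "z \<in> U"
  have i1: "(\<lambda>M. complex_of_real (a M) * F w M) integrable_on {p..r}" if "w \<in> U" for w
    using assms that unfolding good_def
    by (meson Henstock_Kurzweil_Integration.integrable_combine)
  have i2: "(\<lambda>M. complex_of_real (a M) * F' z M) integrable_on {p..r}"
    using assms z unfolding good_def
    by (meson Henstock_Kurzweil_Integration.integrable_combine)
  have d: "((\<lambda>w. integral {p..q} (\<lambda>M. complex_of_real (a M) * F w M)
              + integral {q..r} (\<lambda>M. complex_of_real (a M) * F w M)) has_field_derivative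
       integral {p..q} (\<lambda>M. complex_of_real (a M) * F' z M)
       + integral {q..r} (\<lambda>M. complex_of_real (a M) * F' z M)) (at z)"
    using assms z unfolding good_def by (intro DERIV_add) auto
  have e: "integral {p..q} (\<lambda>M. complex_of_real (a M) * F' z M)
       + integral {q..r} (\<lambda>M. complex_of_real (a M) * F' z M)
      = integral {p..r} (\<lambda>M. complex_of_real (a M) * F' z M)"
    using Henstock_Kurzweil_Integration.integral_combine[OF assms(1,2) i2] .
  show "(\<lambda>M. complex_of_real (a M) * F z M) integrable_on {p..r} \<and>
    (\<lambda>M. complex_of_real (a M) * F' z M) integrable_on {p..r} \<and>
    ((\<lambda>z. integral {p..r} (\<lambda>M. complex_of_real (a M) * F z M)) has_field_derivative
       integral {p..r} (\<lambda>M. complex_of_real (a M) * F' z M)) (at z)"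
  proof (intro conjI i1 i2 z)
    show "((\<lambda>z. integral {p..r} (\<lambda>M. complex_of_real (a M) * F z M)) has_field_derivative
       integral {p..r} (\<lambda>M. complex_of_real (a M) * F' z M)) (at z)"
      using has_field_derivative_transform_within_open[OF d assms(3) z]
        Henstock_Kurzweil_Integration.integral_combine[OF assms(1,2) i1] e by simp
  qed
qed

lemma good_const:
  assumes pq: "p \<le> q" and U: "open U" "convex U"
    and ac: "\<And>M. M \<in> {p<..<q} \<Longrightarrow> a M = c"
    and Fc: "continuous_on (U \<times> {p..q}) (\<lambda>(z, M). F z M)"
    and F'c: "continuous_on (U \<times> {p..q}) (\<lambda>(z, M). F' z M)"
    and Fd: "\<And>z M. z \<in> U \<Longrightarrow> M \<in> {p..q} \<Longrightarrow> ((\<lambda>z. F z M) has_field_derivative F' z M) (at z)"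
  shows "good U F F' a p q"
  unfolding good_def
proof
  fix z assume z: "z \<in> U"
  have fin: "finite {p, q}" by simp
  have sp: "\<And>G. integral {p..q} (\<lambda>M. complex_of_real (a M) * G M) = integral {p..q} (\<lambda>M. complex_of_real c * G M)"
    by (rule integral_spike[OF negligible_finite[OF fin]]) (auto simp: ac)
  have ct: "continuous_on {p..q} (\<lambda>M. F w M)" if "w \<in> U" for w
    by (rule continuous_on_compose2[OF Fc, where f = "\<lambda>M. (w, M)", simplified]) 
       (use that in \<open>auto intro!: continuous_intros\<close>)
  have ct': "continuous_on {p..q} (\<lambda>M. F' w M)" if "w \<in> U" for w
    by (rule continuous_on_compose2[OF F'c, where f = "\<lambda>M. (w, M)", simplified]) 
       (use that in \<open>auto intro!: continuous_intros\<close>)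
  have int1: "(\<lambda>M. complex_of_real c * F w M) integrable_on {p..q}" if "w \<in> U" for w
    by (intro integrable_continuous_interval continuous_intros ct that)
  have int2: "(\<lambda>M. complex_of_real c * F' w M) integrable_on {p..q}" if "w \<in> U" for w
    by (intro integrable_continuous_interval continuous_intros ct' that)
  have L: "((\<lambda>w. integral (cbox p q) (\<lambda>M. complex_of_real c * F w M)) has_field_derivative
       integral (cbox p q) (\<lambda>M. complex_of_real c * F' z M)) (at z within U)"
  proof (rule leibniz_rule_field_derivative[OF _ _ _ z U(2)])
    show "((\<lambda>w. complex_of_real c * F w t) has_field_derivative complex_of_real c * F' x t) (at x within U)"
      if "x \<in> U" "t \<in> cbox p q" for x t
      using that by (intro DERIV_cmult has_field_derivative_at_within[OF Fd]) auto
    show "(\<lambda>M. complex_of_real c * F x M) integrable_on cbox p q" if "x \<in> U" for x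
      using int1[OF that] by simp
    show "continuous_on (U \<times> cbox p q) (\<lambda>(x, t). complex_of_real c * F' x t)"
      using continuous_on_mult[OF continuous_on_const F'c, of "complex_of_real c"]
      by (simp add: split_def)
  qed
  have L2: "((\<lambda>w. integral {p..q} (\<lambda>M. complex_of_real c * F w M)) has_field_derivative
       integral {p..q} (\<lambda>M. complex_of_real c * F' z M)) (at z)"
    using L at_within_open[OF z U(1)] by simp
  show "(\<lambda>M. complex_of_real (a M) * F z M) integrable_on {p..q} \<and>
    (\<lambda>M. complex_of_real (a M) * F' z M) integrable_on {p..q} \<and>
    ((\<lambda>z. integral {p..q} (\<lambda>M. complex_of_real (a M) * F z M)) has_field_derivative
       integral {p..q} (\<lambda>M. complex_of_real (a M) * F' z M)) (at z)"
  proof (intro conjI)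
    show "(\<lambda>M. complex_of_real (a M) * F z M) integrable_on {p..q}"
      by (rule integrable_spike_finite[OF fin _ int1[OF z]]) (auto simp: ac)
    show "(\<lambda>M. complex_of_real (a M) * F' z M) integrable_on {p..q}"
      by (rule integrable_spike_finite[OF fin _ int2[OF z]]) (auto simp: ac)
    show "((\<lambda>z. integral {p..q} (\<lambda>M. complex_of_real (a M) * F z M)) has_field_derivative
       integral {p..q} (\<lambda>M. complex_of_real (a M) * F' z M)) (at z)"
      unfolding sp by (rule L2)
  qed
qed

lemma integral_le_ae:
  fixes f g :: "real \<Rightarrow> real"
  assumes "f integrable_on S" "g integrable_on S" "finite B" "\<And>M. M \<in> S - B \<Longrightarrow> f M \<le> g M"
  shows "integral S f \<le> integral S g"
proof -
  define f' where "f' M = (if M \<in> B then g M else f M)" for M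
  have "integral S f = integral S f'"
    by (rule integral_spike[OF negligible_finite[OF assms(3)]]) (auto simp: f'_def)
  moreover have "f' integrable_on S"
    by (rule integrable_spike_finite[OF assms(3) _ assms(1)]) (auto simp: f'_def)
  moreover have "integral S f' \<le> integral S g"
    by (rule integral_le[OF \<open>f' integrable_on S\<close> assms(2)]) (use assms(4) in \<open>auto simp: f'_def\<close>)
  ultimately show ?thesis by simp
qed


lemma npR1:
  assumes "0 < Im z" "0 < e"
  shows "1 - complex_of_real e / z \<notin> \<real>\<^sub>\<le>\<^sub>0"
proof -
  have "(Re z)^2 + (Im z)^2 > 0" using assms by (simp add: add_nonneg_pos)
  hence "Im (1 - complex_of_real e / z) > 0"
    using assms by (simp add: Im_divide power2_eq_square)
  thus ?thesis by (auto simp: complex_nonpos_Reals_iff)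
qed

lemma npR2:
  assumes "0 < Im z" "0 < e"
  shows "1 - complex_of_real e * z \<notin> \<real>\<^sub>\<le>\<^sub>0"
proof -
  have "Im (1 - complex_of_real e * z) < 0" using assms by simp
  thus ?thesis by (auto simp: complex_nonpos_Reals_iff)
qed

definition "F1 z M = Ln (1 - complex_of_real (exp M) / z)"
definition "F1' z M = complex_of_real (exp M) / (z * (z - complex_of_real (exp M)))"
definition "F2 z M = Ln (1 - complex_of_real (exp (- M)) * z)"
definition "F2' z M = 1 / (z - complex_of_real (exp M))"
definition "UH = {z. 0 < Im z}"

lemma UH_props: "open UH" "convex UH"
  unfolding UH_def by (auto intro: open_halfspace_Im_gt convex_halfspace_Im_gt)

lemma ne_exp: "0 < Im z \<Longrightarrow> z - complex_of_real r \<noteq> 0"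
  by (metis Im_complex_of_real eq_iff_diff_eq_0 less_irrefl)

lemma good1:
  assumes "p \<le> q" "\<And>M. M \<in> {p<..<q} \<Longrightarrow> a M = c"
  shows "good UH F1 F1' a p q"
proof (rule good_const[OF assms(1) UH_props assms(2)])
  show "continuous_on (UH \<times> {p..q}) (\<lambda>(z, M). F1 z M)"
    unfolding F1_def UH_def split_def
    by (intro continuous_intros) (auto dest: npR1[of _ "exp _"])
  show "continuous_on (UH \<times> {p..q}) (\<lambda>(z, M). F1' z M)"
    unfolding F1'_def UH_def split_def
    by (intro continuous_intros) (auto dest: ne_exp)
  show "((\<lambda>z. F1 z M) has_field_derivative F1' z M) (at z)" if "z \<in> UH" "M \<in> {p..q}" for z M
  proof -
    have z: "0 < Im z" using that by (simp add: UH_def)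
    hence z0: "z \<noteq> 0" by auto
    have "z - complex_of_real (exp M) \<noteq> 0" using ne_exp[OF z] .
    define c where "c = complex_of_real (exp M)"
    have d: "((\<lambda>x. 1 - c / x) has_field_derivative c / z^2) (at z)"
      using z0 by (auto intro!: derivative_eq_intros simp: field_simps power2_eq_square)
    have "((\<lambda>x. Ln (1 - c / x)) has_field_derivative inverse (1 - c/z) * (c/z^2)) (at z)"
      by (rule DERIV_chain2[OF has_field_derivative_Ln d]) (use npR1[OF z, of "exp M"] in \<open>simp add: c_def\<close>)
    moreover have "inverse (1 - c/z) * (c/z^2) = c / (z * (z - c))"
      using z0 \<open>z - complex_of_real (exp M) \<noteq> 0\<close> unfolding c_def[symmetric]
      by (simp add: field_simps power2_eq_square)
    ultimately show ?thesis unfolding F1_def F1'_def c_def by simp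
  qed
qed

lemma good2:
  assumes "p \<le> q" "\<And>M. M \<in> {p<..<q} \<Longrightarrow> a M = c"
  shows "good UH F2 F2' a p q"
proof (rule good_const[OF assms(1) UH_props assms(2)])
  show "continuous_on (UH \<times> {p..q}) (\<lambda>(z, M). F2 z M)"
    unfolding F2_def UH_def split_def
    by (intro continuous_intros) (auto dest: npR2[of _ "exp _"])
  show "continuous_on (UH \<times> {p..q}) (\<lambda>(z, M). F2' z M)"
    unfolding F2'_def UH_def split_def
    by (intro continuous_intros) (auto dest: ne_exp)
  show "((\<lambda>z. F2 z M) has_field_derivative F2' z M) (at z)" if "z \<in> UH" "M \<in> {p..q}" for z M
  proof -
    have z: "0 < Im z" using that by (simp add: UH_def)
    have "z - complex_of_real (exp M) \<noteq> 0" using ne_exp[OF z] .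
    define c where "c = complex_of_real (exp (-M))"
    have d: "((\<lambda>x. 1 - c * x) has_field_derivative - c) (at z)"
      by (auto intro!: derivative_eq_intros)
    have "((\<lambda>x. Ln (1 - c * x)) has_field_derivative inverse (1 - c*z) * (-c)) (at z)"
      by (rule DERIV_chain2[OF has_field_derivative_Ln d]) (use npR2[OF z, of "exp (-M)"] in \<open>simp add: c_def\<close>)
    moreover have "inverse (1 - c*z) * (-c) = 1 / (z - complex_of_real (exp M))"
    proof -
      have ce: "c * complex_of_real (exp M) = 1" unfolding c_def
        by (simp flip: of_real_mult add: exp_minus)
      have "1 - c * z \<noteq> 0" using npR2[OF z, of "exp (-M)"] by (auto simp: c_def)
      thus ?thesis using \<open>z - complex_of_real (exp M) \<noteq> 0\<close> ce
        by (simp add: field_simps)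
    qed
    ultimately show ?thesis unfolding F2_def F2'_def c_def by simp
  qed
qed


context
  fixes n :: nat and Vpts \<beta> :: "nat \<Rightarrow> real" and Vf :: "real \<Rightarrow> real"
  assumes Vpts_mono: "\<forall>k<n. Vpts k < Vpts (Suc k)"
    and beta_range: "\<forall>k\<in>{1..n}. \<beta> k \<in> {-1..1}"
    and Vf_lin: "\<forall>k\<in>{1..n}. \<forall>M\<in>{Vpts (k - 1)..Vpts k}.
                   Vf M = Vf (Vpts (k - 1)) + \<beta> k * (M - Vpts (k - 1))"
begin

lemma Vpts_le: "k \<le> m \<Longrightarrow> m \<le> n \<Longrightarrow> Vpts k \<le> Vpts m"
proof (induction m)
  case 0 thus ?case by simp
next
  case (Suc m)
  show ?case
  proof (cases "k = Suc m")
    case False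
    hence "Vpts k \<le> Vpts m" using Suc by simp
    also have "Vpts m < Vpts (Suc m)" using Vpts_mono Suc by simp
    finally show ?thesis by simp
  qed simp
qed

lemma Vpts_less: "k < m \<Longrightarrow> m \<le> n \<Longrightarrow> Vpts k < Vpts m"
proof -
  assume km: "k < m" "m \<le> n"
  then obtain m' where m: "m = Suc m'" by (cases m) auto
  have "Vpts k \<le> Vpts m'" using km m by (intro Vpts_le) auto
  also have "Vpts m' < Vpts m" using Vpts_mono km m by simp
  finally show ?thesis .
qed

lemma deriv_piece:
  assumes k: "k \<in> {1..n}" and M: "M \<in> {Vpts (k - 1)<..<Vpts k}"
  shows "deriv Vf M = \<beta> k"
proof -
  have "((\<lambda>M. Vf (Vpts (k - 1)) + \<beta> k * (M - Vpts (k - 1))) has_field_derivative \<beta> k) (at M)"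
    by (auto intro!: derivative_eq_intros)
  hence "(Vf has_field_derivative \<beta> k) (at M)"
  proof (rule has_field_derivative_transform_within_open[OF _ open_greaterThanLessThan M])
    fix x assume "x \<in> {Vpts (k - 1)<..<Vpts k}"
    hence "x \<in> {Vpts (k - 1)..Vpts k}" by simp
    thus "Vf (Vpts (k - 1)) + \<beta> k * (x - Vpts (k - 1)) = Vf x"
      using Vf_lin k by metis
  qed
  thus ?thesis by (rule DERIV_imp_deriv)
qed

lemma in_piece:
  assumes "M \<in> {Vpts 0..Vpts n}" "M \<notin> Vpts ` {..n}"
  shows "\<exists>k\<in>{1..n}. M \<in> {Vpts (k - 1)<..<Vpts k}"
proof -
  have "Vpts n \<in> Vpts ` {..n}" "Vpts 0 \<in> Vpts ` {..n}" by auto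
  hence "M \<noteq> Vpts n" "M \<noteq> Vpts 0" using assms(2) by metis+
  hence Mn: "M < Vpts n" and M0: "Vpts 0 < M" using assms(1) by auto
  define k where "k = (LEAST k. M < Vpts k)"
  have k1: "M < Vpts k" unfolding k_def by (rule LeastI[of _ n]) (rule Mn)
  have k2: "k \<le> n" unfolding k_def by (rule Least_le) (rule Mn)
  have k0: "k \<noteq> 0" using k1 M0 by (cases k) auto
  have "\<not> M < Vpts (k - 1)" unfolding k_def
    by (rule not_less_Least) (use k0 in \<open>simp add: k_def\<close>)
  moreover have "Vpts (k - 1) \<noteq> M" using assms(2) k2 by auto
  ultimately have "Vpts (k - 1) < M" by simp
  thus ?thesis using k0 k1 k2 by (intro bexI[of _ k]) auto
qed


lemma deriv_range:
  assumes "M \<in> {Vpts 0..Vpts n}" "M \<notin> Vpts ` {..n}"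
  shows "-1 \<le> deriv Vf M \<and> deriv Vf M \<le> 1"
proof -
  obtain k where "k \<in> {1..n}" "M \<in> {Vpts (k - 1)<..<Vpts k}" using in_piece[OF assms] by blast
  moreover have "\<beta> k \<in> {-1..1}" using beta_range calculation(1) by blast
  ultimately show ?thesis using deriv_piece by simp
qed

lemma good_a1: "k \<le> m \<Longrightarrow> m \<le> n \<Longrightarrow> good UH F1 F1' (\<lambda>M. (1 + deriv Vf M) / 2) (Vpts k) (Vpts m)"
proof (induction m)
  case 0 thus ?case by (intro good1[where c=0]) auto
next
  case (Suc m)
  show ?case
  proof (cases "k = Suc m")
    case True thus ?thesis by (intro good1[where c=0]) auto
  next
    case False
    hence IH: "good UH F1 F1' (\<lambda>M. (1 + deriv Vf M) / 2) (Vpts k) (Vpts m)" using Suc by simp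
    have g: "good UH F1 F1' (\<lambda>M. (1 + deriv Vf M) / 2) (Vpts m) (Vpts (Suc m))"
    proof (rule good1[where c="(1 + \<beta> (Suc m)) / 2"])
      show "Vpts m \<le> Vpts (Suc m)" using Suc.prems by (intro Vpts_le) auto
      fix M assume "M \<in> {Vpts m<..<Vpts (Suc m)}"
      thus "(1 + deriv Vf M) / 2 = (1 + \<beta> (Suc m)) / 2"
        using deriv_piece[of "Suc m" M] Suc.prems by simp
    qed
    have "Vpts k \<le> Vpts m" using Suc.prems False by (intro Vpts_le) auto
    moreover have "Vpts m \<le> Vpts (Suc m)" using Suc.prems by (intro Vpts_le) auto
    ultimately show ?thesis by (rule good_combine[OF _ _ UH_props(1) IH g])
  qed
qed

lemma good_a2: "k \<le> m \<Longrightarrow> m \<le> n \<Longrightarrow> good UH F2 F2' (\<lambda>M. (1 - deriv Vf M) / 2) (Vpts k) (Vpts m)"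
proof (induction m)
  case 0 thus ?case by (intro good2[where c=0]) auto
next
  case (Suc m)
  show ?case
  proof (cases "k = Suc m")
    case True thus ?thesis by (intro good2[where c=0]) auto
  next
    case False
    hence IH: "good UH F2 F2' (\<lambda>M. (1 - deriv Vf M) / 2) (Vpts k) (Vpts m)" using Suc by simp
    have g: "good UH F2 F2' (\<lambda>M. (1 - deriv Vf M) / 2) (Vpts m) (Vpts (Suc m))"
    proof (rule good2[where c="(1 - \<beta> (Suc m)) / 2"])
      show "Vpts m \<le> Vpts (Suc m)" using Suc.prems by (intro Vpts_le) auto
      fix M assume "M \<in> {Vpts m<..<Vpts (Suc m)}"
      thus "(1 - deriv Vf M) / 2 = (1 - \<beta> (Suc m)) / 2"
        using deriv_piece[of "Suc m" M] Suc.prems by simp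
    qed
    have "Vpts k \<le> Vpts m" using Suc.prems False by (intro Vpts_le) auto
    moreover have "Vpts m \<le> Vpts (Suc m)" using Suc.prems by (intro Vpts_le) auto
    ultimately show ?thesis by (rule good_combine[OF _ _ UH_props(1) IH g])
  qed
qed

lemma good_tau:
  assumes j: "1 \<le> j" "j \<le> n" and tau: "\<tau> \<in> {Vpts (j - 1)<..<Vpts j}"
  shows "good UH F1 F1' (\<lambda>M. (1 + deriv Vf M) / 2) (Vpts 0) \<tau>"
    and "good UH F2 F2' (\<lambda>M. (1 - deriv Vf M) / 2) \<tau> (Vpts n)"
proof -
  have a: "good UH F1 F1' (\<lambda>M. (1 + deriv Vf M) / 2) (Vpts (j - 1)) \<tau>"
  proof (rule good1[where c="(1 + \<beta> j) / 2"])
    show "Vpts (j - 1) \<le> \<tau>" using tau by simp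
    fix M assume "M \<in> {Vpts (j - 1)<..<\<tau>}"
    hence "M \<in> {Vpts (j - 1)<..<Vpts j}" using tau by simp
    thus "(1 + deriv Vf M) / 2 = (1 + \<beta> j) / 2" using deriv_piece[of j M] j by simp
  qed
  have "Vpts 0 \<le> Vpts (j - 1)" using j by (intro Vpts_le) auto
  moreover have "Vpts (j - 1) \<le> \<tau>" using tau by simp
  ultimately show "good UH F1 F1' (\<lambda>M. (1 + deriv Vf M) / 2) (Vpts 0) \<tau>"
    by (rule good_combine[OF _ _ UH_props(1) good_a1[of 0 "j - 1"] a]) (use j in auto)
  have b: "good UH F2 F2' (\<lambda>M. (1 - deriv Vf M) / 2) \<tau> (Vpts j)"
  proof (rule good2[where c="(1 - \<beta> j) / 2"])
    show "\<tau> \<le> Vpts j" using tau by simp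
    fix M assume "M \<in> {\<tau><..<Vpts j}"
    hence "M \<in> {Vpts (j - 1)<..<Vpts j}" using tau by simp
    thus "(1 - deriv Vf M) / 2 = (1 - \<beta> j) / 2" using deriv_piece[of j M] j by simp
  qed
  have "\<tau> \<le> Vpts j" using tau by simp
  moreover have "Vpts j \<le> Vpts n" using j by (intro Vpts_le) auto
  ultimately show "good UH F2 F2' (\<lambda>M. (1 - deriv Vf M) / 2) \<tau> (Vpts n)"
    by (rule good_combine[OF _ _ UH_props(1) b good_a2[of j n]]) (use j in auto)
qed


lemma S_deriv:
  assumes j: "1 \<le> j" "j \<le> n" and tau: "\<tau> \<in> {Vpts (j - 1)<..<Vpts j}" and w: "0 < Im w"
  shows "(S_fun Vpts n Vf \<tau> chi has_field_derivative
     integral {Vpts 0..\<tau>} (\<lambda>M. complex_of_real ((1 + deriv Vf M) / 2) * F1' w M)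
   - integral {\<tau>..Vpts n} (\<lambda>M. complex_of_real ((1 - deriv Vf M) / 2) * F2' w M)
   - complex_of_real (chi - Vf \<tau> / 2) * inverse w) (at w)"
proof -
  have wU: "w \<in> UH" using w by (simp add: UH_def)
  have d1: "((\<lambda>z. integral {Vpts 0..\<tau>} (\<lambda>M. complex_of_real ((1 + deriv Vf M) / 2) * F1 z M))
     has_field_derivative integral {Vpts 0..\<tau>} (\<lambda>M. complex_of_real ((1 + deriv Vf M) / 2) * F1' w M)) (at w)"
    using good_tau(1)[OF j tau] wU unfolding good_def by blast
  have d2: "((\<lambda>z. integral {\<tau>..Vpts n} (\<lambda>M. complex_of_real ((1 - deriv Vf M) / 2) * F2 z M))
     has_field_derivative integral {\<tau>..Vpts n} (\<lambda>M. complex_of_real ((1 - deriv Vf M) / 2) * F2' w M)) (at w)"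
    using good_tau(2)[OF j tau] wU unfolding good_def by blast
  have eq: "S_fun Vpts n Vf \<tau> chi = (\<lambda>z.
       integral {Vpts 0..\<tau>} (\<lambda>M. complex_of_real ((1 + deriv Vf M) / 2) * F1 z M)
     - integral {\<tau>..Vpts n} (\<lambda>M. complex_of_real ((1 - deriv Vf M) / 2) * F2 z M)
     - complex_of_real (chi - Vf \<tau> / 2) * Ln z)"
    by (rule ext) (simp add: S_fun_def F1_def F2_def)
  have l: "(Ln has_field_derivative inverse w) (at w)"
    by (rule has_field_derivative_Ln) (use w in \<open>auto simp: complex_nonpos_Reals_iff\<close>)
  show ?thesis unfolding eq by (intro DERIV_diff d1 d2 DERIV_cmult l)
qed

lemma S_good_int:
  assumes j: "1 \<le> j" "j \<le> n" and tau: "\<tau> \<in> {Vpts (j - 1)<..<Vpts j}" and w: "0 < Im w"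
  shows "(\<lambda>M. complex_of_real ((1 + deriv Vf M) / 2) * F1' w M) integrable_on {Vpts 0..\<tau>}"
    "(\<lambda>M. complex_of_real ((1 - deriv Vf M) / 2) * F2' w M) integrable_on {\<tau>..Vpts n}"
proof -
  have wU: "w \<in> UH" using w by (simp add: UH_def)
  show "(\<lambda>M. complex_of_real ((1 + deriv Vf M) / 2) * F1' w M) integrable_on {Vpts 0..\<tau>}"
    using good_tau(1)[OF j tau] wU unfolding good_def by blast
  show "(\<lambda>M. complex_of_real ((1 - deriv Vf M) / 2) * F2' w M) integrable_on {\<tau>..Vpts n}"
    using good_tau(2)[OF j tau] wU unfolding good_def by blast
qed

end

definition kk :: "real \<Rightarrow> real \<Rightarrow> real \<Rightarrow> real" where "kk x \<epsilon> M = exp M / ((x - exp M)^2 + \<epsilon>^2)"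

lemma hasint1:
  assumes "((\<lambda>M. complex_of_real (a M) * F1' w M) has_integral I) S" "w = Complex x \<epsilon>" "\<epsilon> > 0"
  shows "((\<lambda>M. a M * kk x \<epsilon> M) has_integral (Im (w * I) / - \<epsilon>)) S"
proof -
  have "((\<lambda>M. w * (complex_of_real (a M) * F1' w M)) has_integral w * I) S"
    by (rule has_integral_mult_right[OF assms(1)])
  from has_integral_linear[OF this bounded_linear_Im]
  have "((\<lambda>M. Im (w * (complex_of_real (a M) * F1' w M))) has_integral Im (w * I)) S"
    by (simp add: o_def)
  from has_integral_mult_right[OF this, of "-1/\<epsilon>"]
  have h: "((\<lambda>M. -1/\<epsilon> * Im (w * (complex_of_real (a M) * F1' w M))) has_integral -1/\<epsilon> * Im (w * I)) S" .
  have w0: "w \<noteq> 0" using assms(2,3) by (auto simp: complex_eq_iff)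
  have pt: "-1/\<epsilon> * Im (w * (complex_of_real (a M) * F1' w M)) = a M * kk x \<epsilon> M" for M
  proof -
    have "w * (complex_of_real (a M) * F1' w M) = complex_of_real (a M) * (complex_of_real (exp M) / (w - complex_of_real (exp M)))"
      using w0 ne_exp[of w "exp M"] assms(2,3) by (simp add: F1'_def field_simps)
    moreover have "Im (complex_of_real (exp M) / (w - complex_of_real (exp M))) = - \<epsilon> * kk x \<epsilon> M"
      using assms(2) by (simp add: Im_divide kk_def power2_eq_square)
    moreover have "Im (complex_of_real r * z) = r * Im z" for r z by simp
    ultimately show ?thesis using assms(3) by (simp only:) (simp add: field_simps)
  qed
  show ?thesis using h unfolding pt by (simp add: divide_simps)
qed

lemma hasint2:
  assumes "((\<lambda>M. complex_of_real (a M) * F2' w M) has_integral I) S" "w = Complex x \<epsilon>" "\<epsilon> > 0"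
  shows "((\<lambda>M. a M * kk x \<epsilon> M) has_integral (Im (w * I) / - \<epsilon>)) S"
proof -
  have "((\<lambda>M. w * (complex_of_real (a M) * F2' w M)) has_integral w * I) S"
    by (rule has_integral_mult_right[OF assms(1)])
  from has_integral_linear[OF this bounded_linear_Im]
  have "((\<lambda>M. Im (w * (complex_of_real (a M) * F2' w M))) has_integral Im (w * I)) S"
    by (simp add: o_def)
  from has_integral_mult_right[OF this, of "-1/\<epsilon>"]
  have h: "((\<lambda>M. -1/\<epsilon> * Im (w * (complex_of_real (a M) * F2' w M))) has_integral -1/\<epsilon> * Im (w * I)) S" .
  have pt: "-1/\<epsilon> * Im (w * (complex_of_real (a M) * F2' w M)) = a M * kk x \<epsilon> M" for M
  proof -
    have "w * (complex_of_real (a M) * F2' w M) = complex_of_real (a M) * (w / (w - complex_of_real (exp M)))"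
      by (simp add: F2'_def field_simps)
    moreover have "Im (w / (w - complex_of_real (exp M))) = - \<epsilon> * kk x \<epsilon> M"
      using assms(2) by (simp add: Im_divide kk_def power2_eq_square algebra_simps)
    moreover have "Im (complex_of_real r * z) = r * Im z" for r z by simp
    ultimately show ?thesis using assms(3) by (simp only:) (simp add: field_simps)
  qed
  show ?thesis using h unfolding pt by (simp add: divide_simps)
qed


lemma kk_pos: "0 < \<epsilon> \<Longrightarrow> 0 < kk x \<epsilon> M"
proof -
  assume e: "0 < \<epsilon>"
  have "0 < \<epsilon>^2" using e by simp
  moreover have "0 \<le> (x - exp M)^2" by simp
  ultimately have "0 < (x - exp M)^2 + \<epsilon>^2" by linarith
  thus ?thesis by (simp add: kk_def)
qed

lemma kk_ftc:
  assumes "a \<le> b" "0 < \<epsilon>"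
  shows "(kk x \<epsilon> has_integral (arctan ((exp b - x) / \<epsilon>) - arctan ((exp a - x) / \<epsilon>)) / \<epsilon>) {a..b}"
proof -
  have "((\<lambda>M. arctan ((exp M - x) / \<epsilon>) / \<epsilon>) has_vector_derivative kk x \<epsilon> M) (at M within {a..b})" for M
  proof -
    have "((\<lambda>M. arctan ((exp M - x) / \<epsilon>) / \<epsilon>) has_field_derivative
        inverse (1 + ((exp M - x) / \<epsilon>)^2) * (exp M / \<epsilon>) / \<epsilon>) (at M)"
      using assms(2) by (auto intro!: derivative_eq_intros)
    moreover have "inverse (1 + ((exp M - x) / \<epsilon>)^2) * (exp M / \<epsilon>) / \<epsilon> = kk x \<epsilon> M"
    proof -
      have h: "\<epsilon>^2 * (1 + ((exp M - x) / \<epsilon>)^2) = (x - exp M)^2 + \<epsilon>^2"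
        using assms(2) by (simp add: field_simps power2_eq_square)
      have "inverse (1 + ((exp M - x) / \<epsilon>)^2) * (exp M / \<epsilon>) / \<epsilon>
           = exp M / (\<epsilon>^2 * (1 + ((exp M - x) / \<epsilon>)^2))"
        by (simp add: field_simps power2_eq_square)
      thus ?thesis unfolding h kk_def .
    qed
    ultimately show ?thesis
      by (simp add: has_real_derivative_iff_has_vector_derivative[symmetric] has_field_derivative_at_within)
  qed
  from fundamental_theorem_of_calculus[OF assms(1) this]
  show ?thesis using assms by (simp add: diff_divide_distrib)
qed

lemma E1:
  assumes pq: "p \<le> q" and Bs: "finite Bs" and c: "\<And>M. M \<in> {p..q} - Bs \<Longrightarrow> 0 \<le> c M \<and> c M \<le> 1"
    and R: "((\<lambda>M. c M * kk x \<epsilon> M) has_integral R) {p..q}" and d: "0 < d"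
    and dM: "\<And>M. M \<in> {p..q} \<Longrightarrow> d \<le> \<bar>x - exp M\<bar>" and e: "0 < \<epsilon>"
  shows "R \<le> (q - p) * (exp q / d^2)"
proof -
  have "R = integral {p..q} (\<lambda>M. c M * kk x \<epsilon> M)" using R by (simp add: integral_unique)
  also have "\<dots> \<le> integral {p..q} (\<lambda>M. exp q / d^2)"
  proof (rule integral_le_ae[OF _ _ Bs])
    show "(\<lambda>M. exp q / d^2) integrable_on {p..q}" by (intro integrable_continuous_interval continuous_intros)
    show "(\<lambda>M. c M * kk x \<epsilon> M) integrable_on {p..q}" using R by blast
    fix M assume M: "M \<in> {p..q} - Bs"
    have kp: "0 < kk x \<epsilon> M" by (rule kk_pos[OF e])
    have "d^2 \<le> \<bar>x - exp M\<bar>^2" using dM[of M] M d by (intro power_mono) auto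
    moreover have "\<bar>x - exp M\<bar>^2 = (x - exp M)^2" by simp
    moreover have "0 \<le> \<epsilon>^2" by simp
    ultimately have "d^2 \<le> (x - exp M)^2 + \<epsilon>^2" by linarith
    moreover have d2: "0 < d^2" using d by simp
    ultimately have pos: "0 < (x - exp M)^2 + \<epsilon>^2" by linarith
    have "kk x \<epsilon> M \<le> exp M / d^2" unfolding kk_def using d2 pos \<open>d^2 \<le> (x - exp M)^2 + \<epsilon>^2\<close>
      by (intro divide_left_mono) auto
    also have "\<dots> \<le> exp q / d^2" using M d by (intro divide_right_mono) auto
    finally have "kk x \<epsilon> M \<le> exp q / d^2" .
    moreover have "c M * kk x \<epsilon> M \<le> kk x \<epsilon> M" using c[OF M] kp
      by (simp add: mult_left_le_one_le)
    ultimately show "c M * kk x \<epsilon> M \<le> exp q / d^2" by linarith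
  qed
  also have "\<dots> = (q - p) * (exp q / d^2)" using pq by simp
  finally show ?thesis .
qed

lemma arctan_nonneg: "0 \<le> x \<Longrightarrow> 0 \<le> arctan x"
  using arctan_le_iff[of 0 x] by simp

lemma E2:
  assumes ord: "p \<le> r1" "r1 < r2" "r2 \<le> q" and Bs: "finite Bs"
    and c: "\<And>M. M \<in> {p..q} - Bs \<Longrightarrow> 0 \<le> c M"
    and cd: "\<And>M. M \<in> {r1<..<r2} \<Longrightarrow> c M = \<delta>" and \<delta>: "0 < \<delta>"
    and x: "exp r1 \<le> x" "x \<le> exp r2" and e: "0 < \<epsilon>" "\<epsilon> \<le> 1"
    and R: "((\<lambda>M. c M * kk x \<epsilon> M) has_integral R) {p..q}"
  shows "\<delta> * arctan ((exp r2 - exp r1) / 2) \<le> \<epsilon> * R"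
proof -
  define f where "f = (\<lambda>M. c M * kk x \<epsilon> M)"
  have fi: "f integrable_on {p..q}" unfolding f_def using R by blast
  have R': "R = integral {p..q} f" using R by (simp add: integral_unique f_def)
  have fi1: "f integrable_on {p..r1}" "f integrable_on {r1..r2}" "f integrable_on {r2..q}"
    using ord by (auto intro: integrable_subinterval_real[OF fi])
  have c1: "integral {p..q} f = integral {p..r2} f + integral {r2..q} f"
    using ord by (intro Henstock_Kurzweil_Integration.integral_combine[symmetric] fi) auto
  have fi2: "f integrable_on {p..r2}" using ord by (auto intro: integrable_subinterval_real[OF fi])
  have c2: "integral {p..r2} f = integral {p..r1} f + integral {r1..r2} f"
    using ord by (intro Henstock_Kurzweil_Integration.integral_combine[symmetric] fi2) auto
  have nn: "0 \<le> integral {a..b} f" if "{a..b} \<subseteq> {p..q}" "f integrable_on {a..b}" for a b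
  proof -
    have "integral {a..b} (\<lambda>M. 0) \<le> integral {a..b} f"
    proof (rule integral_le_ae[OF _ that(2) Bs])
      fix M assume M: "M \<in> {a..b} - Bs"
      hence "0 \<le> c M" using c that(1) by auto
      thus "0 \<le> f M" using kk_pos[OF e(1), of x M] by (simp add: f_def)
    qed (rule integrable_0)
    thus ?thesis by simp
  qed
  have n1: "0 \<le> integral {p..r1} f" using ord fi1 by (intro nn) auto
  have n3: "0 \<le> integral {r2..q} f" using ord fi1 by (intro nn) auto
  have mid: "integral {r1..r2} f = integral {r1..r2} (\<lambda>M. \<delta> * kk x \<epsilon> M)"
    by (rule integral_spike[OF negligible_finite[of "{r1, r2}"]]) (auto simp: f_def cd)
  have K: "integral {r1..r2} (kk x \<epsilon>) = (arctan ((exp r2 - x) / \<epsilon>) - arctan ((exp r1 - x) / \<epsilon>)) / \<epsilon>"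
    using kk_ftc[of r1 r2 \<epsilon> x] ord e by (simp add: integral_unique)
  have "\<epsilon> * R \<ge> \<epsilon> * integral {r1..r2} f" using n1 n3 c1 c2 R' e by simp
  also have "\<epsilon> * integral {r1..r2} f = \<delta> * (arctan ((exp r2 - x) / \<epsilon>) - arctan ((exp r1 - x) / \<epsilon>))"
    unfolding mid integral_mult_right K using e by simp
  finally have A: "\<delta> * (arctan ((exp r2 - x) / \<epsilon>) - arctan ((exp r1 - x) / \<epsilon>)) \<le> \<epsilon> * R" .
  define P where "P = exp r2 - x"
  define Q where "Q = x - exp r1"
  have PQ: "0 \<le> P" "0 \<le> Q" "P + Q = exp r2 - exp r1" using x by (auto simp: P_def Q_def)
  have aP: "0 \<le> arctan (P / \<epsilon>)" "0 \<le> arctan (Q / \<epsilon>)" using PQ e by (auto intro: arctan_nonneg)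
  have eq: "arctan ((exp r2 - x) / \<epsilon>) - arctan ((exp r1 - x) / \<epsilon>) = arctan (P / \<epsilon>) + arctan (Q / \<epsilon>)"
  proof -
    have "(exp r1 - x) / \<epsilon> = - (Q / \<epsilon>)" by (simp add: Q_def minus_divide_left)
    thus ?thesis by (simp add: P_def arctan_minus)
  qed
  have big: "arctan ((exp r2 - exp r1) / 2) \<le> arctan (P / \<epsilon>) + arctan (Q / \<epsilon>)"
  proof (cases "P \<ge> Q")
    case True
    hence "exp r2 - exp r1 \<le> 2 * P" using PQ by linarith
    hence "(exp r2 - exp r1) / 2 \<le> P" by simp
    also have "P \<le> P / \<epsilon>"
    proof -
      have "P * \<epsilon> \<le> P * 1" using PQ e by (intro mult_left_mono) auto
      thus ?thesis using e by (simp add: le_divide_eq)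
    qed
    finally have "arctan ((exp r2 - exp r1) / 2) \<le> arctan (P / \<epsilon>)" by (simp add: arctan_le_iff)
    thus ?thesis using aP by linarith
  next
    case False
    hence "exp r2 - exp r1 \<le> 2 * Q" using PQ by linarith
    hence "(exp r2 - exp r1) / 2 \<le> Q" by simp
    also have "Q \<le> Q / \<epsilon>"
    proof -
      have "Q * \<epsilon> \<le> Q * 1" using PQ e by (intro mult_left_mono) auto
      thus ?thesis using e by (simp add: le_divide_eq)
    qed
    finally have "arctan ((exp r2 - exp r1) / 2) \<le> arctan (Q / \<epsilon>)" by (simp add: arctan_le_iff)
    thus ?thesis using aP by linarith
  qed
  have "\<delta> * arctan ((exp r2 - exp r1) / 2) \<le> \<delta> * (arctan (P / \<epsilon>) + arctan (Q / \<epsilon>))"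
    using big \<delta> by simp
  thus ?thesis using A eq by simp
qed


theorem lemma2p1:
  fixes n i j :: nat and Vpts \<beta> :: "nat \<Rightarrow> real" and Vf :: "real \<Rightarrow> real" and \<tau> chi :: real
  assumes Vpts_mono: "\<forall>k<n. Vpts k < Vpts (Suc k)"
    and beta_range: "\<forall>k\<in>{1..n}. \<beta> k \<in> {-1..1}"
    and beta_distinct: "\<forall>k\<le>n. beta_ext \<beta> n k \<noteq> beta_ext \<beta> n (Suc k)"
    and Vf_cont: "continuous_on {Vpts 0..Vpts n} Vf"
    and Vf_lin: "\<forall>k\<in>{1..n}. \<forall>M\<in>{Vpts (k - 1)..Vpts k}.
                   Vf M = Vf (Vpts (k - 1)) + \<beta> k * (M - Vpts (k - 1))"
    and j: "1 \<le> j" "j \<le> n"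
    and tau: "\<tau> \<in> {Vpts (j - 1)<..<Vpts j}"
    and i: "1 \<le> i" "i \<le> n" "i \<noteq> j"
    and beta_i: "\<beta> i \<noteq> 1" "\<beta> i \<noteq> -1"
  shows "\<not> (\<exists>z0\<in>{exp (Vpts (i - 1))..exp (Vpts i)}.
            ((\<lambda>z. z * deriv (S_fun Vpts n Vf \<tau> chi) z) \<longlongrightarrow> 0)
              (at (complex_of_real z0) within (UNIV - \<real>)))"
proof
  assume "\<exists>z0\<in>{exp (Vpts (i - 1))..exp (Vpts i)}.
            ((\<lambda>z. z * deriv (S_fun Vpts n Vf \<tau> chi) z) \<longlongrightarrow> 0)
              (at (complex_of_real z0) within (UNIV - \<real>))"
  then obtain x where xI: "exp (Vpts (i - 1)) \<le> x" "x \<le> exp (Vpts i)"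
    and lim: "((\<lambda>z. z * deriv (S_fun Vpts n Vf \<tau> chi) z) \<longlongrightarrow> 0)
              (at (complex_of_real x) within (UNIV - \<real>))" by auto
  define S where "S = S_fun Vpts n Vf \<tau> chi"
  define a1 where "a1 = (\<lambda>M. (1 + deriv Vf M) / 2)"
  define a2 where "a2 = (\<lambda>M. (1 - deriv Vf M) / 2)"
  define T where "T \<epsilon> = Im (Complex x \<epsilon> * deriv S (Complex x \<epsilon>))" for \<epsilon>
  note VL = Vpts_le[OF Vpts_mono beta_range Vf_lin]
  note VLs = Vpts_less[OF Vpts_mono beta_range Vf_lin]
  note DR = deriv_range[OF Vpts_mono beta_range Vf_lin]
  note DP = deriv_piece[OF Vpts_mono beta_range Vf_lin]
  have fl: "filterlim (\<lambda>\<epsilon>. Complex x \<epsilon>) (at (complex_of_real x) within (UNIV - \<real>)) (at_right 0)"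
  proof (rule filterlim_at_withinI)
    have "((\<lambda>\<epsilon>. Complex x \<epsilon>) \<longlongrightarrow> Complex x 0) (at_right 0)"
      by (intro tendsto_Complex tendsto_const tendsto_ident_at)
    thus "((\<lambda>\<epsilon>. Complex x \<epsilon>) \<longlongrightarrow> complex_of_real x) (at_right 0)"
      by (simp add: complex_of_real_def)
    show "\<forall>\<^sub>F \<epsilon> in at_right 0. Complex x \<epsilon> \<in> UNIV - \<real> - {complex_of_real x}"
      by (rule eventually_mono[OF eventually_at_right_less]) (auto simp: complex_is_Real_iff)
  qed
  have "((\<lambda>\<epsilon>. Complex x \<epsilon> * deriv S (Complex x \<epsilon>)) \<longlongrightarrow> 0) (at_right 0)"
    using filterlim_compose[OF lim fl] unfolding S_def .
  from tendsto_Im[OF this] have Tlim: "(T \<longlongrightarrow> 0) (at_right 0)" unfolding T_def by simp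
  have ev: "\<forall>\<^sub>F \<epsilon> in at_right (0::real). 0 < \<epsilon> \<and> \<epsilon> \<le> 1"
  proof -
    have "\<forall>\<^sub>F \<epsilon> in at_right (0::real). \<epsilon> < 1"
      by (rule order_tendstoD(2)[OF tendsto_ident_at]) simp
    thus ?thesis using eventually_at_right_less[of "0::real"]
      by eventually_elim auto
  qed
  have nb: "at_right (0::real) \<noteq> bot" by simp
  have Tform: "\<exists>R1 R2. ((\<lambda>M. a1 M * kk x \<epsilon> M) has_integral R1) {Vpts 0..\<tau>} \<and>
      ((\<lambda>M. a2 M * kk x \<epsilon> M) has_integral R2) {\<tau>..Vpts n} \<and> T \<epsilon> = \<epsilon> * R2 - \<epsilon> * R1"
    if e: "0 < \<epsilon>" for \<epsilon>
  proof -
    define w where "w = Complex x \<epsilon>"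
    have w: "0 < Im w" "w \<noteq> 0" using e by (auto simp: w_def complex_eq_iff)
    define I1 where "I1 = integral {Vpts 0..\<tau>} (\<lambda>M. complex_of_real (a1 M) * F1' w M)"
    define I2 where "I2 = integral {\<tau>..Vpts n} (\<lambda>M. complex_of_real (a2 M) * F2' w M)"
    have D: "deriv S w = I1 - I2 - complex_of_real (chi - Vf \<tau> / 2) * inverse w"
      unfolding S_def I1_def I2_def a1_def a2_def
      by (rule DERIV_imp_deriv[OF S_deriv[OF Vpts_mono beta_range Vf_lin j tau w(1)]])
    have h1: "((\<lambda>M. complex_of_real (a1 M) * F1' w M) has_integral I1) {Vpts 0..\<tau>}"
      unfolding I1_def a1_def using S_good_int(1)[OF Vpts_mono beta_range Vf_lin j tau w(1)]
      by (rule integrable_integral)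
    have h2: "((\<lambda>M. complex_of_real (a2 M) * F2' w M) has_integral I2) {\<tau>..Vpts n}"
      unfolding I2_def a2_def using S_good_int(2)[OF Vpts_mono beta_range Vf_lin j tau w(1)]
      by (rule integrable_integral)
    have r1: "((\<lambda>M. a1 M * kk x \<epsilon> M) has_integral (Im (w * I1) / - \<epsilon>)) {Vpts 0..\<tau>}"
      by (rule hasint1[OF h1 w_def e])
    have r2: "((\<lambda>M. a2 M * kk x \<epsilon> M) has_integral (Im (w * I2) / - \<epsilon>)) {\<tau>..Vpts n}"
      by (rule hasint2[OF h2 w_def e])
    have "T \<epsilon> = Im (w * I1) - Im (w * I2) - Im (complex_of_real (chi - Vf \<tau> / 2) * (w * inverse w))"
      unfolding T_def w_def[symmetric] D by (simp add: algebra_simps)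
    also have "\<dots> = Im (w * I1) - Im (w * I2)" using w(2) by simp
    also have "\<dots> = \<epsilon> * (Im (w * I2) / - \<epsilon>) - \<epsilon> * (Im (w * I1) / - \<epsilon>)" using e by simp
    finally show ?thesis using r1 r2 by blast
  qed
  define Bs where "Bs = Vpts ` {..n}"
  have Bs: "finite Bs" by (simp add: Bs_def)
  have a1r: "0 \<le> a1 M \<and> a1 M \<le> 1" if "M \<in> {Vpts 0..Vpts n} - Bs" for M
    using DR[of M] that by (auto simp: a1_def Bs_def)
  have a2r: "0 \<le> a2 M \<and> a2 M \<le> 1" if "M \<in> {Vpts 0..Vpts n} - Bs" for M
    using DR[of M] that by (auto simp: a2_def Bs_def)
  have V0j: "Vpts 0 \<le> Vpts (j - 1)" "Vpts j \<le> Vpts n" using j by (auto intro: VL)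
  have tauV: "Vpts 0 < \<tau>" "\<tau> < Vpts n" using tau V0j by auto
  have Vi: "Vpts (i - 1) < Vpts i" using i by (intro VLs) auto
  have Lpos: "0 < arctan ((exp (Vpts i) - exp (Vpts (i - 1))) / 2)"
    using Vi arctan_less_iff[of 0 "(exp (Vpts i) - exp (Vpts (i - 1))) / 2"] by simp
  have bi: "\<beta> i \<in> {-1..1}" using beta_range i by auto
  show False
  proof (cases "i < j")
    case True
    define \<delta> where "\<delta> = (1 + \<beta> i) / 2"
    have \<delta>: "0 < \<delta>" using bi beta_i by (auto simp: \<delta>_def)
    define \<eta> where "\<eta> = \<delta> * arctan ((exp (Vpts i) - exp (Vpts (i - 1))) / 2)"
    have \<eta>: "0 < \<eta>" using \<delta> Lpos by (simp add: \<eta>_def)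
    have "Vpts i \<le> Vpts (j - 1)" using True j by (intro VL) auto
    hence iT: "Vpts i < \<tau>" using tau by simp
    define d where "d = exp \<tau> - x"
    have d: "0 < d" using xI iT by (simp add: d_def) (meson exp_less_cancel_iff less_le_trans not_le)
    define C where "C = (Vpts n - \<tau>) * (exp (Vpts n) / d^2)"
    have bound: "T \<epsilon> - \<epsilon> * C \<le> - \<eta>" if e: "0 < \<epsilon>" "\<epsilon> \<le> 1" for \<epsilon>
    proof -
      obtain R1 R2 where R1: "((\<lambda>M. a1 M * kk x \<epsilon> M) has_integral R1) {Vpts 0..\<tau>}"
        and R2: "((\<lambda>M. a2 M * kk x \<epsilon> M) has_integral R2) {\<tau>..Vpts n}"
        and TT: "T \<epsilon> = \<epsilon> * R2 - \<epsilon> * R1" using Tform[OF e(1)] by blast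
      have "\<eta> \<le> \<epsilon> * R1" unfolding \<eta>_def
      proof (rule E2[OF _ Vi _ Bs _ _ \<delta> xI e R1])
        show "Vpts 0 \<le> Vpts (i - 1)" by (rule VL) (use i in auto)
        show "Vpts i \<le> \<tau>" using iT by simp
        show "0 \<le> a1 M" if "M \<in> {Vpts 0..\<tau>} - Bs" for M using a1r[of M] that tauV by auto
        show "a1 M = \<delta>" if "M \<in> {Vpts (i - 1)<..<Vpts i}" for M
          using DP[of i M] that i by (simp add: a1_def \<delta>_def)
      qed
      moreover have "R2 \<le> C" unfolding C_def
      proof (rule E1[OF _ Bs _ R2 d _ e(1)])
        show "\<tau> \<le> Vpts n" using tauV by simp
        show "0 \<le> a2 M \<and> a2 M \<le> 1" if "M \<in> {\<tau>..Vpts n} - Bs" for M using a2r[of M] that tauV by auto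
        show "d \<le> \<bar>x - exp M\<bar>" if "M \<in> {\<tau>..Vpts n}" for M
        proof -
          have h1: "exp \<tau> \<le> exp M" using that by simp
          have h2: "exp M - x \<le> \<bar>x - exp M\<bar>" by linarith
          show ?thesis unfolding d_def using h1 h2 by linarith
        qed
      qed
      hence "\<epsilon> * R2 \<le> \<epsilon> * C" using e by simp
      ultimately show ?thesis using TT by linarith
    qed
    have "((\<lambda>\<epsilon>. T \<epsilon> - \<epsilon> * C) \<longlongrightarrow> 0 - 0 * C) (at_right 0)"
      by (intro tendsto_intros Tlim tendsto_ident_at)
    hence "0 \<le> - \<eta>"
      by (intro tendsto_upperbound[OF _ _ nb]) (auto intro: eventually_mono[OF ev] bound)
    thus False using \<eta> by simp
  next
    case False
    hence ji: "j < i" using i by simp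
    define \<delta> where "\<delta> = (1 - \<beta> i) / 2"
    have \<delta>: "0 < \<delta>" using bi beta_i by (auto simp: \<delta>_def)
    define \<eta> where "\<eta> = \<delta> * arctan ((exp (Vpts i) - exp (Vpts (i - 1))) / 2)"
    have \<eta>: "0 < \<eta>" using \<delta> Lpos by (simp add: \<eta>_def)
    have "Vpts j \<le> Vpts (i - 1)" using ji i by (intro VL) auto
    hence iT: "\<tau> < Vpts (i - 1)" using tau by simp
    define d where "d = x - exp \<tau>"
    have d: "0 < d" using xI iT by (simp add: d_def) (meson exp_less_cancel_iff le_less_trans not_le)
    define C where "C = (\<tau> - Vpts 0) * (exp \<tau> / d^2)"
    have bound: "\<eta> \<le> T \<epsilon> + \<epsilon> * C" if e: "0 < \<epsilon>" "\<epsilon> \<le> 1" for \<epsilon>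
    proof -
      obtain R1 R2 where R1: "((\<lambda>M. a1 M * kk x \<epsilon> M) has_integral R1) {Vpts 0..\<tau>}"
        and R2: "((\<lambda>M. a2 M * kk x \<epsilon> M) has_integral R2) {\<tau>..Vpts n}"
        and TT: "T \<epsilon> = \<epsilon> * R2 - \<epsilon> * R1" using Tform[OF e(1)] by blast
      have "\<eta> \<le> \<epsilon> * R2" unfolding \<eta>_def
      proof (rule E2[OF _ Vi _ Bs _ _ \<delta> xI e R2])
        show "\<tau> \<le> Vpts (i - 1)" using iT by simp
        show "Vpts i \<le> Vpts n" by (rule VL) (use i in auto)
        show "0 \<le> a2 M" if "M \<in> {\<tau>..Vpts n} - Bs" for M using a2r[of M] that tauV by auto
        show "a2 M = \<delta>" if "M \<in> {Vpts (i - 1)<..<Vpts i}" for M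
          using DP[of i M] that i by (simp add: a2_def \<delta>_def)
      qed
      moreover have "R1 \<le> C" unfolding C_def
      proof (rule E1[OF _ Bs _ R1 d _ e(1)])
        show "Vpts 0 \<le> \<tau>" using tauV by simp
        show "0 \<le> a1 M \<and> a1 M \<le> 1" if "M \<in> {Vpts 0..\<tau>} - Bs" for M using a1r[of M] that tauV by auto
        show "d \<le> \<bar>x - exp M\<bar>" if "M \<in> {Vpts 0..\<tau>}" for M
        proof -
          have h1: "exp M \<le> exp \<tau>" using that by simp
          have h2: "x - exp M \<le> \<bar>x - exp M\<bar>" by linarith
          show ?thesis unfolding d_def using h1 h2 by linarith
        qed
      qed
      hence "\<epsilon> * R1 \<le> \<epsilon> * C" using e by simp
      ultimately show ?thesis using TT by linarith
    qed
    have "((\<lambda>\<epsilon>. T \<epsilon> + \<epsilon> * C) \<longlongrightarrow> 0 + 0 * C) (at_right 0)"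
      by (intro tendsto_intros Tlim tendsto_ident_at)
    hence "\<eta> \<le> 0"
      by (intro tendsto_lowerbound[OF _ _ nb]) (auto intro: eventually_mono[OF ev] bound)
    thus False using \<eta> by simp
  qed
qed

end
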